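(* Let $a,b,m>0$ be real numbers. Suppose $p,q$ are increasing functions on the positive integers with \[\frac{p(n)}{n^m}\to a\quad\text{and}\quad\frac{q(n)}{n^m}\to b.\] Let $h_n:=\frac{1}{p(n)}$ and $k_n:=\frac{1}{q(n)}$. Let $f$ be a real valued function defined on $D=\{0,h_1,-k_1,h_2,-k_2,\ldots\}$ and let $R,L$ be real numbers. If $f(0)=0$ and \[\frac{f(h_n)}{h_n}\to R\quad\text{and}\quad\frac{f(-k_n)}{-k_n}\to L,\] then every real number between $L$ and $R$ is a sequential cord derivative of $f$ at $0$.
   Context: $L'\in\overline{\mathbb{R}}=\mathbb{R}\cup\{\pm\infty\}$ is a sequential cord derivative of $f$ at $0$ if there are sequences $h'_n>0$, $k'_n>0$ with $h'_n\to0$, $k'_n\to0$, $h'_n\in D$, $-k'_n\in D$ for all $n$, and $\frac{f(h'_n)-f(-k'_n)}{h'_n+k'_n}\to L'$. *)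

theory Defs
  imports Complex_Main "HOL-Library.Extended_Real"
begin

definition seq_cord_deriv :: "(real \<Rightarrow> real) \<Rightarrow> real set \<Rightarrow> ereal \<Rightarrow> bool" where
  "seq_cord_deriv f D L' \<longleftrightarrow>
     (\<exists>hh kk :: nat \<Rightarrow> real.
        (\<forall>n. hh n > 0 \<and> kk n > 0 \<and> hh n \<in> D \<and> - kk n \<in> D) \<and>
        hh \<longlonglongrightarrow> 0 \<and> kk \<longlonglongrightarrow> 0 \<and>
        (\<lambda>n. ereal ((f (hh n) - f (- kk n)) / (hh n + kk n))) \<longlonglongrightarrow> L')"

end

theory Submission
  imports Defs
begin

lemma ratio_lim:
  fixes P Q :: "nat \<Rightarrow> real" and I J :: "nat \<Rightarrow> nat"
  assumes "\<alpha> > 0" "m > 0"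
    and P: "(\<lambda>n. P n / real n powr m) \<longlonglongrightarrow> \<alpha>"
    and Q: "(\<lambda>n. Q n / real n powr m) \<longlonglongrightarrow> \<beta>"
    and I: "filterlim I at_top sequentially" and J: "filterlim J at_top sequentially"
    and c: "(\<lambda>n. real (J n) / real (I n)) \<longlonglongrightarrow> c" "c \<ge> 0"
    and pos: "\<forall>n. I n \<ge> 1 \<and> J n \<ge> 1 \<and> P (I n) > 0"
  shows "(\<lambda>n. Q (J n) / P (I n)) \<longlonglongrightarrow> (\<beta> / \<alpha>) * c powr m"
proof -
  have h1: "(\<lambda>n. Q (J n) / real (J n) powr m) \<longlonglongrightarrow> \<beta>"
    using filterlim_compose[OF Q J] by (simp add: o_def)
  have h2: "(\<lambda>n. P (I n) / real (I n) powr m) \<longlonglongrightarrow> \<alpha>"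
    using filterlim_compose[OF P I] by (simp add: o_def)
  have h3: "(\<lambda>n. (real (J n) / real (I n)) powr m) \<longlonglongrightarrow> c powr m"
    by (rule tendsto_powr'[OF c(1)]) (use assms in auto)
  have "(\<lambda>n. (Q (J n) / real (J n) powr m) * (real (J n) / real (I n)) powr m
          / (P (I n) / real (I n) powr m)) \<longlonglongrightarrow> \<beta> * c powr m / \<alpha>"
    using assms by (intro tendsto_intros h1 h2 h3) auto
  moreover have "(Q (J n) / real (J n) powr m) * (real (J n) / real (I n)) powr m
          / (P (I n) / real (I n) powr m) = Q (J n) / P (I n)" for n
  proof -
    have "J n > 0" "I n > 0" "P (I n) > 0" using spec[OF pos, of n] by auto
    then have "real (J n) > 0" "real (I n) > 0" "P (I n) > 0" by auto
    then show ?thesis by (simp add: powr_divide field_simps)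
  qed
  ultimately show ?thesis by simp
qed

lemma quot_lim:
  fixes P Q :: "nat \<Rightarrow> real" and f :: "real \<Rightarrow> real"
  assumes pos: "\<forall>n. P n > 0 \<and> Q n > 0"
    and R: "(\<lambda>n. f (1 / P n) / (1 / P n)) \<longlonglongrightarrow> R"
    and L: "(\<lambda>n. f (- (1 / Q n)) / (- (1 / Q n))) \<longlonglongrightarrow> L"
    and r: "(\<lambda>n. Q n / P n) \<longlonglongrightarrow> \<rho>" "\<rho> \<ge> 0"
  shows "(\<lambda>n. (f (1 / P n) - f (- (1 / Q n))) / (1 / P n + 1 / Q n)) \<longlonglongrightarrow> (\<rho> * R + L) / (\<rho> + 1)"
proof -
  have "(\<lambda>n. ((Q n / P n) * (f (1 / P n) / (1 / P n)) + f (- (1 / Q n)) / (- (1 / Q n))) / (Q n / P n + 1))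
        \<longlonglongrightarrow> (\<rho> * R + L) / (\<rho> + 1)"
    using r by (intro tendsto_intros R L) auto
  moreover have "((Q n / P n) * (f (1 / P n) / (1 / P n)) + f (- (1 / Q n)) / (- (1 / Q n))) / (Q n / P n + 1)
     = (f (1 / P n) - f (- (1 / Q n))) / (1 / P n + 1 / Q n)" for n
  proof -
    have "P n > 0" "Q n > 0" using pos by auto
    then show ?thesis by (simp add: field_simps)
  qed
  ultimately show ?thesis by simp
qed

lemma quot_lim':
  fixes P Q :: "nat \<Rightarrow> real" and f :: "real \<Rightarrow> real"
  assumes pos: "\<forall>n. P n > 0 \<and> Q n > 0"
    and R: "(\<lambda>n. f (1 / P n) / (1 / P n)) \<longlonglongrightarrow> R"
    and L: "(\<lambda>n. f (- (1 / Q n)) / (- (1 / Q n))) \<longlonglongrightarrow> L"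
    and r: "(\<lambda>n. P n / Q n) \<longlonglongrightarrow> 0"
  shows "(\<lambda>n. (f (1 / P n) - f (- (1 / Q n))) / (1 / P n + 1 / Q n)) \<longlonglongrightarrow> R"
proof -
  have "(\<lambda>n. ((f (1 / P n) / (1 / P n)) + (P n / Q n) * (f (- (1 / Q n)) / (- (1 / Q n)))) / (1 + P n / Q n))
        \<longlonglongrightarrow> (R + 0 * L) / (1 + 0)"
    using r by (intro tendsto_intros R L) auto
  moreover have "((f (1 / P n) / (1 / P n)) + (P n / Q n) * (f (- (1 / Q n)) / (- (1 / Q n)))) / (1 + P n / Q n)
     = (f (1 / P n) - f (- (1 / Q n))) / (1 / P n + 1 / Q n)" for n
  proof -
    have "P n > 0" "Q n > 0" using pos by auto
    then show ?thesis by (simp add: field_simps)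
  qed
  ultimately show ?thesis by simp
qed

lemma inv_lim:
  fixes P :: "nat \<Rightarrow> real" and I :: "nat \<Rightarrow> nat"
  assumes "\<alpha> > 0" "m > 0"
    and P: "(\<lambda>n. P n / real n powr m) \<longlonglongrightarrow> \<alpha>"
    and I: "filterlim I at_top sequentially"
    and pos: "\<forall>n. I n \<ge> 1"
  shows "(\<lambda>n. 1 / P (I n)) \<longlonglongrightarrow> 0"
proof -
  have h2: "(\<lambda>n. P (I n) / real (I n) powr m) \<longlonglongrightarrow> \<alpha>"
    using filterlim_compose[OF P I] by (simp add: o_def)
  have IR: "filterlim (\<lambda>n. real (I n)) at_top sequentially"
    using filterlim_compose[OF filterlim_real_sequentially I] by (simp add: o_def)
  have h3: "(\<lambda>n. real (I n) powr (- m)) \<longlonglongrightarrow> 0"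
    using tendsto_neg_powr[OF _ IR] assms by simp
  have "(\<lambda>n. inverse (P (I n) / real (I n) powr m) * real (I n) powr (- m)) \<longlonglongrightarrow> inverse \<alpha> * 0"
    using assms by (intro tendsto_intros h2 h3) auto
  moreover have "(\<lambda>n. inverse (P (I n) / real (I n) powr m) * real (I n) powr (- m)) = (\<lambda>n. 1 / P (I n))"
  proof (rule ext)
    fix n
    have "I n > 0" using spec[OF pos, of n] by auto
    then have "real (I n) > 0" by simp
    then show "inverse (P (I n) / real (I n) powr m) * real (I n) powr (- m) = 1 / P (I n)"
      by (simp add: powr_minus field_simps)
  qed
  ultimately show ?thesis by (simp only: mult_zero_right)
qed

theorem theorem4p5:
  fixes a b m R L :: real and p q :: "nat \<Rightarrow> real" and f :: "real \<Rightarrow> real"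
  assumes "a > 0" and "b > 0" and "m > 0"
    and "mono_on {1..} p" and "mono_on {1..} q"
    and "\<forall>n\<ge>1. p n > 0" and "\<forall>n\<ge>1. q n > 0"
    and "(\<lambda>n. p n / real n powr m) \<longlonglongrightarrow> a"
    and "(\<lambda>n. q n / real n powr m) \<longlonglongrightarrow> b"
    and "f 0 = 0"
    and "(\<lambda>n. f (1 / p n) / (1 / p n)) \<longlonglongrightarrow> R"
    and "(\<lambda>n. f (- (1 / q n)) / (- (1 / q n))) \<longlonglongrightarrow> L"
  shows "\<forall>x. min L R \<le> x \<and> x \<le> max L R \<longrightarrow>
           seq_cord_deriv f ({0} \<union> {1 / p n | n. n \<ge> 1} \<union> {- (1 / q n) | n. n \<ge> 1}) (ereal x)"
proof (intro allI impI)
  fix x assume x: "min L R \<le> x \<and> x \<le> max L R"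
  define D where "D = ({0} \<union> {1 / p n | n. n \<ge> 1} \<union> {- (1 / q n) | n. n \<ge> 1})"
  have key: "seq_cord_deriv f D (ereal x)"
    if I: "filterlim I at_top sequentially" and J: "filterlim J at_top sequentially"
      and IJ: "\<forall>n. I n \<ge> 1 \<and> J n \<ge> 1"
      and lim: "(\<lambda>n. (f (1 / p (I n)) - f (- (1 / q (J n)))) / (1 / p (I n) + 1 / q (J n))) \<longlonglongrightarrow> x"
    for I J :: "nat \<Rightarrow> nat"
    unfolding seq_cord_deriv_def
  proof (intro exI conjI allI)
    fix n
    show "1 / p (I n) > 0" "1 / q (J n) > 0" using IJ assms(6,7) by auto
    show "1 / p (I n) \<in> D" "- (1 / q (J n)) \<in> D" using IJ unfolding D_def by blast+
  next
    show "(\<lambda>n. 1 / p (I n)) \<longlonglongrightarrow> 0" using inv_lim[OF assms(1,3,8) I] IJ by auto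
    show "(\<lambda>n. 1 / q (J n)) \<longlonglongrightarrow> 0" using inv_lim[OF assms(2,3,9) J] IJ by auto
    show "(\<lambda>n. ereal ((f (1 / p (I n)) - f (- (1 / q (J n)))) / (1 / p (I n) + 1 / q (J n))))
          \<longlonglongrightarrow> ereal x" using lim by (simp add: lim_ereal)
  qed
  have sq: "filterlim (\<lambda>n::nat. (n+1)^2) at_top sequentially"
    by (rule filterlim_at_top_mono[OF filterlim_Suc]) (auto simp: power2_eq_square)
  show "seq_cord_deriv f D (ereal x)"
  proof (cases "x = R")
    case True
    let ?I = "\<lambda>n::nat. n + 1" and ?J = "\<lambda>n::nat. (n+1)^2"
    have I: "filterlim ?I at_top sequentially" using filterlim_Suc by simp
    have c: "(\<lambda>n. real (?I n) / real (?J n)) \<longlonglongrightarrow> 0"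
    proof -
      have "(\<lambda>n. 1 / real (Suc n)) \<longlonglongrightarrow> 0" by (rule LIMSEQ_Suc[OF lim_const_over_n])
      moreover have "real (?I n) / real (?J n) = 1 / real (Suc n)" for n
      proof -
        have "real ((n+1)^2) = real (Suc n) * real (Suc n)" by (simp only: of_nat_mult power2_eq_square Suc_eq_plus1)
        moreover have "real (Suc n) > 0" by simp
        ultimately show ?thesis by (simp only: Suc_eq_plus1[symmetric]) simp
      qed
      ultimately show ?thesis by simp
    qed
    have r: "(\<lambda>n. p (?I n) / q (?J n)) \<longlonglongrightarrow> (a / b) * 0 powr m"
      by (rule ratio_lim[OF assms(2,3,9,8) sq I c]) (use assms(6,7) in auto)
    have "(\<lambda>n. (f (1 / p (?I n)) - f (- (1 / q (?J n)))) / (1 / p (?I n) + 1 / q (?J n))) \<longlonglongrightarrow> R"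
      by (rule quot_lim'[where P="\<lambda>n. p (?I n)" and Q="\<lambda>n. q (?J n)"])
        (use assms(6,7) r filterlim_compose[OF assms(11) I, unfolded o_def]
          filterlim_compose[OF assms(12) sq, unfolded o_def] in auto)
    then show ?thesis using key[OF I sq] True by auto
  next
    case False
    define s where "s = (x - L) / (R - x)"
    have s0: "s \<ge> 0" using x False unfolding s_def
      by (cases "L \<le> R") (auto simp: divide_nonneg_nonneg divide_nonpos_nonpos)
    have xs: "x = (s * R + L) / (s + 1)"
    proof -
      have h: "R - x \<noteq> 0" using False by simp
      have "R - L \<noteq> 0" using False x by auto
      have e1: "s + 1 = (R - L) / (R - x)" using h unfolding s_def by (simp add: field_simps)
      have e2: "s * R + L = x * (R - L) / (R - x)" using h unfolding s_def by (simp add: field_simps)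
      show ?thesis unfolding e1 e2 using h \<open>R - L \<noteq> 0\<close> by simp
    qed
    define c where "c = (s * a / b) powr (1 / m)"
    have c0: "c \<ge> 0" unfolding c_def by simp
    have cm: "c powr m = s * a / b" unfolding c_def using assms(1,2,3) s0
      by (simp add: powr_powr)
    let ?I = "\<lambda>n::nat. (n+1)^2" and ?J = "\<lambda>n::nat. nat \<lceil>c * real ((n+1)^2)\<rceil> + (n + 1)"
    have J: "filterlim ?J at_top sequentially"
      by (rule filterlim_at_top_mono[OF filterlim_Suc]) auto
    have cl: "(\<lambda>n. real (?J n) / real (?I n)) \<longlonglongrightarrow> c"
    proof (rule tendsto_sandwich[where f="\<lambda>n. c" and h="\<lambda>n. c + 2 * (1 / real (Suc n))"])
      have "(\<lambda>n. 1 / real (Suc n)) \<longlonglongrightarrow> 0" by (rule LIMSEQ_Suc[OF lim_const_over_n])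
      then show "(\<lambda>n. c + 2 * (1 / real (Suc n))) \<longlonglongrightarrow> c"
        using tendsto_add[OF tendsto_const tendsto_mult[OF tendsto_const]] by fastforce
      show "(\<lambda>n. c) \<longlonglongrightarrow> c" by simp
      show "\<forall>\<^sub>F n in sequentially. c \<le> real (?J n) / real (?I n)"
      proof (rule always_eventually, rule allI)
        fix n :: nat
        define N where "N = real (Suc n)"
        have N: "N \<ge> 1" unfolding N_def by simp
        have ce: "real (nat \<lceil>c * N^2\<rceil>) = of_int \<lceil>c * N^2\<rceil>" using c0 N by simp
        have cei: "c * N^2 \<le> of_int \<lceil>c * N^2\<rceil>" by simp
        have eqJ: "real (?J n) = of_int \<lceil>c * N^2\<rceil> + N" and eqI: "real (?I n) = N^2"
          using ce unfolding N_def by auto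
        have "c * N^2 \<le> real (?J n)" using cei eqJ N by linarith
        moreover have "N^2 > 0" using N by simp
        ultimately show "c \<le> real (?J n) / real (?I n)" unfolding eqI
          by (simp add: pos_le_divide_eq)
      qed
      show "\<forall>\<^sub>F n in sequentially. real (?J n) / real (?I n) \<le> c + 2 * (1 / real (Suc n))"
      proof (rule always_eventually, rule allI)
        fix n :: nat
        define N where "N = real (Suc n)"
        have N: "N \<ge> 1" unfolding N_def by simp
        have ce: "real (nat \<lceil>c * N^2\<rceil>) = of_int \<lceil>c * N^2\<rceil>" using c0 N by simp
        have cei: "of_int \<lceil>c * N^2\<rceil> \<le> c * N^2 + 1" by linarith
        have eqJ: "real (?J n) = of_int \<lceil>c * N^2\<rceil> + N" and eqI: "real (?I n) = N^2"
          using ce unfolding N_def by auto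
        have NN: "1 \<le> N" using N by simp
        have "(c + 2 * (1 / N)) * N^2 = c * N^2 + 2 * N" using N by (simp add: power2_eq_square field_simps)
        then have "real (?J n) \<le> (c + 2 * (1 / N)) * N^2" using cei eqJ NN by linarith
        moreover have "N^2 > 0" using N by simp
        ultimately show "real (?J n) / real (?I n) \<le> c + 2 * (1 / real (Suc n))"
          unfolding eqI N_def[symmetric] by (simp add: pos_divide_le_eq)
      qed
    qed
    have r: "(\<lambda>n. q (?J n) / p (?I n)) \<longlonglongrightarrow> (b / a) * c powr m"
      by (rule ratio_lim[OF assms(1,3,8,9) sq J cl c0]) (use assms(6,7) in auto)
    have r': "(\<lambda>n. q (?J n) / p (?I n)) \<longlonglongrightarrow> s"
      using r cm assms(1,2) by simp
    have "(\<lambda>n. (f (1 / p (?I n)) - f (- (1 / q (?J n)))) / (1 / p (?I n) + 1 / q (?J n))) \<longlonglongrightarrow> (s * R + L) / (s + 1)"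
      by (rule quot_lim[where P="\<lambda>n. p (?I n)" and Q="\<lambda>n. q (?J n)"])
        (use assms(6,7) r' s0 filterlim_compose[OF assms(11) sq, unfolded o_def]
          filterlim_compose[OF assms(12) J, unfolded o_def] in auto)
    then show ?thesis using key[OF sq J] xs by auto
  qed
qed

end
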